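(* Let $m\geq 2$ and let $f=a_0+a_1z+\cdots+a_mz^m\in\mathbb{Z}[z]$ be a primitive polynomial with $a_0a_m\neq 0$. Suppose there is an index $j$ with $0\leq j\leq m-1$ such that $$|a_j|>\frac{|a_{j+1}|}{|a_m|}+\sum_{0\leq i<j}|a_i||a_m|^{j-i}+\sum_{j+1<i\leq m}|a_i||a_m|^{-(i-j)},$$ where an empty sum is $0$. Then $f$ is a product of at most $m-j$ irreducible polynomials in $\mathbb{Z}[z]$. In particular, if $j=m-1$, then $f$ is irreducible in $\mathbb{Z}[z]$.
   Context: A polynomial in $\mathbb{Z}[z]$ is primitive if the greatest common divisor of its coefficients is $1$. "$f$ is a product of at most $r$ irreducible polynomials" means that in a factorization of $f$ into irreducible elements of $\mathbb{Z}[z]$, the number of factors (counted with multiplicity) is at most $r$. *)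

theory Defs
  imports "HOL-Computational_Algebra.Computational_Algebra"
begin

end

theory Submission imports Defs "HOL-Complex_Analysis.Complex_Analysis" begin

hide_const (open) Henstock_Kurzweil_Integration.content

lemma map_poly_of_int_mult:
  "map_poly (of_int :: int \<Rightarrow> 'a::comm_ring_1) (p * q) = map_poly of_int p * map_poly of_int q"
  by (simp add: poly_eq_iff coeff_mult coeff_map_poly)

lemma holo_poly: "poly (p::complex poly) holomorphic_on S"
  unfolding poly_altdef by (intro holomorphic_intros)

lemma map_poly_of_int_0_iff [simp]: "map_poly (of_int :: int \<Rightarrow> complex) p = 0 \<longleftrightarrow> p = 0"
  by (rule map_poly_eq_0_iff) auto

lemma zorder_poly:
  fixes p :: "complex poly"
  assumes "p \<noteq> 0"
  shows "zorder (poly p) a = int (order a p)"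
proof -
  obtain q where q: "p = [:-a,1:]^order a p * q" and nd: "\<not> [:-a,1:] dvd q"
    using order_decomp[OF assms] by blast
  have qa: "poly q a \<noteq> 0" using nd by (simp add: poly_eq_0_iff_dvd)
  show ?thesis
  proof (rule zorder_eqI[of UNIV a "poly q"])
    fix w assume "w \<in> (UNIV::complex set)" "w \<noteq> a"
    show "poly p w = poly q w * (w - a) powi int (order a p)"
      by (subst q) (simp add: poly_power power_int_of_nat)
  qed (use qa holo_poly in auto)
qed

lemma size_filter_proots:
  fixes P :: "'a::idom poly"
  assumes "P \<noteq> 0"
  shows "size (filter_mset Q (proots P)) = (\<Sum>x\<in>{x. poly P x = 0 \<and> Q x}. order x P)"
proof -
  have "size (filter_mset Q (proots P)) = sum (count (filter_mset Q (proots P))) (set_mset (filter_mset Q (proots P)))"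
    by (rule size_multiset_overloaded_eq)
  also have "set_mset (filter_mset Q (proots P)) = {x. poly P x = 0 \<and> Q x}"
    using assms by auto
  also have "sum (count (filter_mset Q (proots P))) {x. poly P x = 0 \<and> Q x} = (\<Sum>x\<in>{x. poly P x = 0 \<and> Q x}. order x P)"
    using assms by (intro sum.cong) auto
  finally show ?thesis .
qed

lemma rouche_poly:
  fixes P :: "complex poly" and c :: complex
  assumes P: "P \<noteq> 0" and r: "r > 0" and c: "c \<noteq> 0"
    and circ: "\<forall>z. cmod z = r \<longrightarrow> cmod (poly P z - c*z^j) < cmod (c*z^j)"
  shows "size (filter_mset (\<lambda>x. cmod x < r) (proots P)) = j"
proof -
  define \<gamma> where "\<gamma> = circlepath 0 r"
  have fin: "finite {p. poly P p = 0}" using P poly_roots_finite by blast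
  have fin2: "finite {p. c * p ^ j = 0}"
  proof -
    have "{p. c * p ^ j = 0} \<subseteq> {0}" using c by auto
    then show ?thesis using finite_subset by blast
  qed
  have R: "(\<Sum>p\<in>{p\<in>UNIV. c * p ^ j + (poly P p - c * p ^ j) = 0}. winding_number \<gamma> p * of_int (zorder (\<lambda>p. c * p ^ j + (poly P p - c * p ^ j)) p))
        = (\<Sum>p\<in>{p\<in>UNIV. c * p ^ j = 0}. winding_number \<gamma> p * of_int (zorder (\<lambda>p. c * p ^ j) p))"
    by (rule Rouche_theorem[of UNIV "\<lambda>z. c*z^j" "\<lambda>z. poly P z - c*z^j" \<gamma>])
       (use fin fin2 circ r in \<open>auto simp: \<gamma>_def holo_poly intro!: holomorphic_intros\<close>)
  have e1: "(\<lambda>p. c * p ^ j + (poly P p - c * p ^ j)) = poly P" by auto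
  have nocirc: "cmod p \<noteq> r" if "poly P p = 0" for p
    using circ that by (metis diff_0 norm_minus_cancel order_less_irrefl)
  have wn: "winding_number \<gamma> p = (if cmod p < r then 1 else 0)" if "poly P p = 0" for p
  proof (cases "cmod p < r")
    case True then show ?thesis unfolding \<gamma>_def by (simp add: winding_number_circlepath)
  next
    case False
    then have "cmod p > r" using nocirc[OF that] by auto
    then have "winding_number \<gamma> p = 0" unfolding \<gamma>_def
      by (intro winding_number_zero_outside[of _ "cball 0 r"]) (use r in auto)
    then show ?thesis using False by simp
  qed
  have "(\<Sum>p\<in>{p. poly P p = 0}. winding_number \<gamma> p * of_int (zorder (poly P) p))
       = (\<Sum>p\<in>{p. poly P p = 0}. if cmod p < r then of_nat (order p P) else 0)"
    by (intro sum.cong) (auto simp: wn zorder_poly[OF P])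
  also have "\<dots> = (\<Sum>p\<in>{p \<in> {p. poly P p = 0}. cmod p < r}. of_nat (order p P))"
    using sum.inter_filter[OF fin, of "\<lambda>p. of_nat (order p P)" "\<lambda>p. cmod p < r", symmetric] by simp
  also have "\<dots> = of_nat (size (filter_mset (\<lambda>x. cmod x < r) (proots P)))"
    by (simp add: size_filter_proots[OF P])
  finally have L: "(\<Sum>p\<in>{p. poly P p = 0}. winding_number \<gamma> p * of_int (zorder (poly P) p))
     = of_nat (size (filter_mset (\<lambda>x. cmod x < r) (proots P)))" .
  have zo: "zorder (\<lambda>p. c * p ^ j) 0 = int j"
    by (rule zorder_eqI[of UNIV 0 "\<lambda>_. c"]) (use c in \<open>auto simp: power_int_of_nat\<close>)
  have "(\<Sum>p\<in>{p. c * p ^ j = 0}. winding_number \<gamma> p * of_int (zorder (\<lambda>p. c * p ^ j) p)) = of_nat j"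
  proof (cases "j = 0")
    case True then show ?thesis using c by simp
  next
    case False
    then have "{p. c * p ^ j = 0} = {0}" using c by auto
    then show ?thesis using zo r by (simp add: \<gamma>_def winding_number_circlepath_centre)
  qed
  with R L e1 have "(of_nat (size (filter_mset (\<lambda>x. cmod x < r) (proots P))) :: complex) = of_nat j"
    by simp
  then show ?thesis using of_nat_eq_iff by blast
qed

lemma prod_mset_bound:
  fixes M :: "complex multiset"
  assumes "M \<noteq> {#}" "\<forall>x\<in>#M. cmod x < r"
  shows "cmod (\<Prod>x\<in>#M. - x) < r ^ size M"
  using assms
proof (induction M)
  case empty then show ?case by simp
next
  case (add a M)
  show ?case
  proof (cases "M = {#}")
    case True then show ?thesis using add by simp
  next
    case False
    have IH: "cmod (\<Prod>x\<in>#M. - x) < r ^ size M" using add False by auto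
    have a: "cmod a < r" using add by auto
    have "cmod (\<Prod>x\<in>#add_mset a M. - x) = cmod a * cmod (\<Prod>x\<in>#M. - x)"
      by (simp add: norm_mult)
    also have "\<dots> < r * r ^ size M"
      using IH a by (intro mult_strict_mono) (auto intro: le_less_trans[OF norm_ge_zero])
    finally show ?thesis by simp
  qed
qed

lemma root_prod_bound:
  fixes P :: "complex poly"
  assumes "degree P \<ge> 1" "\<forall>x. poly P x = 0 \<longrightarrow> cmod x < r"
  shows "cmod (poly P 0) < cmod (lead_coeff P) * r ^ degree P"
proof -
  have P: "P \<noteq> 0" using assms by auto
  have "poly P 0 = lead_coeff P * (\<Prod>x\<in>#proots P. - x)"
    by (subst (1) complex_poly_decompose_multiset[symmetric]) (simp add: poly_prod_mset)
  moreover have "proots P \<noteq> {#}" using assms size_proots_complex[of P] by auto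
  moreover have "\<forall>x\<in>#proots P. cmod x < r" using assms P by auto
  ultimately have "cmod (poly P 0) < cmod (lead_coeff P) * r ^ size (proots P)"
    using prod_mset_bound[of "proots P" r] P by (simp add: norm_mult)
  then show ?thesis by (simp add: size_proots_complex)
qed

lemma circ_ineq:
  fixes f :: "int poly" and m j :: nat and z :: complex
  assumes deg: "degree f = m" and jm: "j \<le> m - 1" and m1: "m \<ge> 1"
    and am: "coeff f m \<noteq> 0"
    and hyp: "real_of_int \<bar>coeff f j\<bar> >
           real_of_int \<bar>coeff f (j+1)\<bar> / real_of_int \<bar>coeff f m\<bar>
           + (\<Sum>i<j. real_of_int \<bar>coeff f i\<bar> * real_of_int \<bar>coeff f m\<bar> ^ (j - i))
           + (\<Sum>i\<in>{j+2..m}. real_of_int \<bar>coeff f i\<bar> / real_of_int \<bar>coeff f m\<bar> ^ (i - j))"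
    and z: "cmod z = 1 / real_of_int \<bar>coeff f m\<bar>"
  shows "cmod (poly (map_poly of_int f) z - of_int (coeff f j) * z ^ j) < cmod (of_int (coeff f j) * z ^ j)"
proof -
  define R where "R = real_of_int \<bar>coeff f m\<bar>"
  define r where "r = 1 / R"
  define a where "a = (\<lambda>i. real_of_int \<bar>coeff f i\<bar>)"
  have R1: "R \<ge> 1" using am unfolding R_def by linarith
  have r0: "r > 0" using R1 unfolding r_def by simp
  have rR: "r * R = 1" using R1 unfolding r_def by simp
  have zr: "cmod z = r" using z unfolding r_def R_def by simp
  have degF: "degree (map_poly (of_int :: int \<Rightarrow> complex) f) = m"
    using deg by (simp add: degree_map_poly)
  have jin: "j \<in> {..m}" using jm m1 by auto
  have "poly (map_poly of_int f) z = (\<Sum>i\<le>m. of_int (coeff f i) * z ^ i)"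
    by (simp add: poly_altdef degF coeff_map_poly)
  also have "\<dots> = of_int (coeff f j) * z ^ j + (\<Sum>i\<in>{..m}-{j}. of_int (coeff f i) * z ^ i)"
    using jin by (simp add: sum.remove)
  finally have pe: "poly (map_poly of_int f) z - of_int (coeff f j) * z ^ j = (\<Sum>i\<in>{..m}-{j}. of_int (coeff f i) * z ^ i)"
    by simp
  have "cmod (\<Sum>i\<in>{..m}-{j}. of_int (coeff f i) * z ^ i) \<le> (\<Sum>i\<in>{..m}-{j}. cmod (of_int (coeff f i) * z ^ i))"
    by (rule norm_sum)
  also have "\<dots> = (\<Sum>i\<in>{..m}-{j}. a i * r ^ i)"
    by (intro sum.cong) (auto simp: norm_mult norm_power zr a_def)
  finally have le0: "cmod (\<Sum>i\<in>{..m}-{j}. of_int (coeff f i) * z ^ i) \<le> (\<Sum>i\<in>{..m}-{j}. a i * r ^ i)" .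
  have sets: "{..m}-{j} = {..<j} \<union> ({j+1} \<union> {j+2..m})" using jm m1 by auto
  have "(\<Sum>i\<in>{..m}-{j}. a i * r ^ i) = (\<Sum>i\<in>{..<j} \<union> ({j+1} \<union> {j+2..m}). a i * r ^ i)"
    by (simp only: sets)
  also have "(\<Sum>i\<in>{..<j} \<union> ({j+1} \<union> {j+2..m}). a i * r ^ i)
      = (\<Sum>i<j. a i * r ^ i) + (a (j+1) * r^(j+1) + (\<Sum>i\<in>{j+2..m}. a i * r ^ i))"
  proof -
    have "(\<Sum>i\<in>{..<j} \<union> ({j+1} \<union> {j+2..m}). a i * r ^ i) = (\<Sum>i<j. a i * r ^ i) + (\<Sum>i\<in>{j+1} \<union> {j+2..m}. a i * r ^ i)"
      by (rule sum.union_disjoint) auto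
    moreover have "(\<Sum>i\<in>{j+1} \<union> {j+2..m}. a i * r ^ i) = a (j+1) * r^(j+1) + (\<Sum>i\<in>{j+2..m}. a i * r ^ i)"
      by simp
    ultimately show ?thesis by simp
  qed
  also have "(\<Sum>i<j. a i * r ^ i) = r^j * (\<Sum>i<j. a i * R ^ (j - i))"
  proof -
    have eq: "a i * r ^ i = r^j * (a i * R ^ (j - i))" if "i < j" for i
    proof -
      have "r ^ j * R ^ (j - i) = r ^ i * ((r * R) ^ (j - i))"
        using that by (simp add: power_mult_distrib power_add[symmetric])
      then show ?thesis using rR by simp
    qed
    show ?thesis unfolding sum_distrib_left by (rule sum.cong[OF refl], rule eq, simp)
  qed
  also have "(\<Sum>i\<in>{j+2..m}. a i * r ^ i) = r^j * (\<Sum>i\<in>{j+2..m}. a i / R ^ (i - j))"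
  proof -
    have eq: "a i * r ^ i = r^j * (a i / R ^ (i - j))" if "i \<in> {j+2..m}" for i
    proof -
      have "r ^ i = r ^ j * r ^ (i - j)" using that by (simp add: power_add[symmetric])
      then show ?thesis by (simp add: r_def power_one_over)
    qed
    show ?thesis unfolding sum_distrib_left by (rule sum.cong[OF refl], rule eq, simp)
  qed
  also have "a (j+1) * r^(j+1) = r^j * (a (j+1) / R)" by (simp add: r_def)
  finally have eqB: "(\<Sum>i\<in>{..m}-{j}. a i * r ^ i) =
      r^j * (\<Sum>i<j. a i * R ^ (j - i)) + (r^j * (a (j+1) / R) + r^j * (\<Sum>i\<in>{j+2..m}. a i / R ^ (i - j)))" .
  have le: "cmod (\<Sum>i\<in>{..m}-{j}. of_int (coeff f i) * z ^ i) \<le>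
      r^j * ((\<Sum>i<j. a i * R ^ (j - i)) + ((a (j+1) / R) + (\<Sum>i\<in>{j+2..m}. a i / R ^ (i - j))))"
    using le0 eqB by (simp add: algebra_simps)
  also have "\<dots> < r^j * a j"
    using hyp r0 unfolding a_def R_def by (intro mult_strict_left_mono) auto
  also have "r^j * a j = cmod (of_int (coeff f j) * z ^ j)"
    by (simp add: norm_mult norm_power zr a_def)
  finally show ?thesis using pe by simp
qed

lemma irr_fact:
  fixes x :: "int poly"
  assumes "x \<noteq> 0" "\<not> is_unit x"
  shows "\<exists>fs. (\<forall>g\<in>#fs. irreducible g) \<and> prod_mset fs = x \<and> fs \<noteq> {#}"
proof -
  define P where "P = prime_factorization x"
  have pP: "normalize (prod_mset P) = normalize x" using assms(1) unfolding P_def by (rule prod_mset_prime_factorization_weak)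
  have "P \<noteq> {#}"
  proof
    assume "P = {#}"
    then have "normalize x = 1" using pP by simp
    then have "is_unit x" by (simp add: normalize_1_iff)
    then show False using assms by blast
  qed
  then obtain p where p: "p \<in># P" by (metis all_not_in_conv set_mset_eq_empty_iff)
  have Qn: "prod_mset P \<noteq> 0"
  proof
    assume "prod_mset P = 0"
    then have "normalize (prod_mset P) = 0" by (simp only: normalize_0)
    then have "normalize x = 0" using pP by (simp only:)
    then show False using assms(1) by simp
  qed
  have "prod_mset P dvd x" using pP by (rule associatedD1)
  then obtain u where xu: "x = prod_mset P * u" by blast
  have "x dvd prod_mset P" using pP by (rule associatedD2)
  then have "prod_mset P * u dvd prod_mset P * 1" using xu by simp
  then have u: "is_unit u" using Qn dvd_times_left_cancel_iff by blast
  define fs where "fs = add_mset (u*p) (P - {#p#})"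
  have irrP: "irreducible q" if "q \<in># P" for q
  proof -
    have "prime q" using that unfolding P_def by (rule in_prime_factors_imp_prime)
    then show ?thesis by (intro prime_elem_imp_irreducible prime_imp_prime_elem)
  qed
  have i1: "irreducible (u*p)" using irrP[OF p] u by (simp add: irreducible_mult_unit_left)
  have i2: "irreducible q" if "q \<in># P - {#p#}" for q
    using irrP that by (meson in_diffD)
  have "\<forall>g\<in>#fs. irreducible g"
  proof
    fix g assume "g \<in># fs"
    then have "g = u*p \<or> g \<in># P - {#p#}" unfolding fs_def by (simp only: set_mset_add_mset_insert insert_iff)
    then show "irreducible g" using i1 i2 by blast
  qed
  moreover have "prod_mset fs = x"
  proof -
    have "prod_mset fs = u * (p * prod_mset (P - {#p#}))" unfolding fs_def by (simp only: prod_mset.add_mset mult.assoc)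
    also have "p * prod_mset (P - {#p#}) = prod_mset P" using p by (rule prod_mset.remove[symmetric])
    finally show ?thesis using xu by (simp only: mult.commute)
  qed
  moreover have "fs \<noteq> {#}" unfolding fs_def by simp
  ultimately show ?thesis by (intro exI[of _ fs] conjI)
qed

lemma factor_has_outer_root:
  fixes f g :: "int poly" and r :: real
  assumes gf: "g dvd f" and irr: "irreducible g" and cf: "content f = 1" and f0: "coeff f 0 \<noteq> 0"
    and r: "r > 0" "r \<le> 1" and lr: "real_of_int \<bar>lead_coeff f\<bar> * r \<le> 1"
  shows "\<exists>x. poly (map_poly of_int g :: complex poly) x = 0 \<and> \<not> cmod x < r"
proof (rule ccontr)
  assume nx: "\<not> ?thesis"
  obtain h where fgh: "f = g * h" using gf by blast
  have fn0: "f \<noteq> 0" using f0 by auto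
  then have gn0: "g \<noteq> 0" and hn0: "h \<noteq> 0" using fgh by auto
  have dg: "degree g \<ge> 1"
  proof (rule ccontr)
    assume "\<not> degree g \<ge> 1"
    then have "degree g = 0" by simp
    then have geq: "g = [:coeff g 0:]" using degree_0_id by metis
    then have "coeff g 0 dvd content f" using gf const_poly_dvd_iff_dvd_content by metis
    then have "is_unit (coeff g 0)" using cf by simp
    then have "is_unit g" using geq is_unit_poly_iff by metis
    then show False using irr irreducible_not_unit by blast
  qed
  have g0: "coeff g 0 \<noteq> 0" using f0 fgh by (simp add: coeff_mult_0)
  have lcf: "lead_coeff f = lead_coeff g * lead_coeff h" using fgh by (simp add: lead_coeff_mult)
  have "\<bar>lead_coeff h\<bar> \<ge> 1" using hn0 by (simp add: int_one_le_iff_zero_less)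
  then have "\<bar>lead_coeff g\<bar> * 1 \<le> \<bar>lead_coeff g\<bar> * \<bar>lead_coeff h\<bar>"
    by (intro mult_left_mono) auto
  then have "\<bar>lead_coeff g\<bar> \<le> \<bar>lead_coeff f\<bar>" using lcf by (simp add: abs_mult)
  then have "real_of_int \<bar>lead_coeff g\<bar> \<le> real_of_int \<bar>lead_coeff f\<bar>" by simp
  then have "real_of_int \<bar>lead_coeff g\<bar> * r \<le> real_of_int \<bar>lead_coeff f\<bar> * r"
    using r by (intro mult_right_mono) auto
  then have lgr: "real_of_int \<bar>lead_coeff g\<bar> * r \<le> 1"
    using lr by linarith
  define G where "G = (map_poly of_int g :: complex poly)"
  have dG: "degree G = degree g" unfolding G_def by (simp add: degree_map_poly)
  have b1: "cmod (poly G 0) < cmod (lead_coeff G) * r ^ degree G"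
    by (rule root_prod_bound) (use dg dG nx G_def in auto)
  have b2: "poly G 0 = of_int (coeff g 0)" unfolding G_def by (simp add: poly_0_coeff_0 coeff_map_poly)
  have b3: "lead_coeff G = of_int (lead_coeff g)" using dG unfolding G_def by (simp add: coeff_map_poly)
  have "r ^ degree G \<le> r ^ 1" using dg dG r by (intro power_decreasing) auto
  then have b4: "cmod (lead_coeff G) * r ^ degree G \<le> cmod (lead_coeff G) * r"
    by (intro mult_left_mono) auto
  have "real_of_int \<bar>coeff g 0\<bar> = cmod (poly G 0)" using b2 by (simp only: norm_of_int of_int_abs)
  also have "\<dots> < cmod (lead_coeff G) * r" using b1 b4 by linarith
  also have "cmod (lead_coeff G) = real_of_int \<bar>lead_coeff g\<bar>" using b3 by (simp only: norm_of_int of_int_abs)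
  finally have "real_of_int \<bar>coeff g 0\<bar> < real_of_int \<bar>lead_coeff g\<bar> * r" .
  then have "real_of_int \<bar>coeff g 0\<bar> < 1" using lgr by linarith
  then have "coeff g 0 = 0" by linarith
  then show False using g0 by simp
qed

lemma count_out:
  fixes r :: real
  assumes "\<forall>g\<in>#fs. \<exists>x. poly (map_poly of_int g :: complex poly) x = 0 \<and> \<not> cmod x < r"
    and "prod_mset fs \<noteq> 0"
  shows "size fs \<le> size (filter_mset (\<lambda>x. \<not> cmod x < r) (proots (map_poly of_int (prod_mset fs) :: complex poly)))"
  using assms
proof (induction fs)
  case empty then show ?case by simp
next
  case (add g fs)
  define G where "G = (map_poly of_int g :: complex poly)"
  define Q where "Q = (map_poly of_int (prod_mset fs) :: complex poly)"
  have gn: "g \<noteq> 0" and qn: "prod_mset fs \<noteq> 0" using add.prems by auto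
  have Gn: "G \<noteq> 0" and Qn: "Q \<noteq> 0" using gn qn unfolding G_def Q_def by auto
  have IH: "size fs \<le> size (filter_mset (\<lambda>x. \<not> cmod x < r) (proots Q))"
    using add qn unfolding Q_def by auto
  obtain x where x: "poly G x = 0" "\<not> cmod x < r" using add.prems G_def by auto
  have "x \<in># filter_mset (\<lambda>x. \<not> cmod x < r) (proots G)" using x Gn by auto
  then obtain N where "filter_mset (\<lambda>x. \<not> cmod x < r) (proots G) = add_mset x N"
    by (metis multi_member_split)
  then have "size (filter_mset (\<lambda>x. \<not> cmod x < r) (proots G)) \<ge> 1" by simp
  moreover have "map_poly of_int (prod_mset (add_mset g fs)) = G * Q"
    unfolding G_def Q_def by (simp add: map_poly_of_int_mult)
  ultimately show ?case using IH Gn Qn by (simp add: proots_mult)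
qed

theorem corollary6:
  fixes f :: "int poly" and m j :: nat
  assumes "m \<ge> 2"
    and "degree f = m"
    and "content f = 1"
    and "coeff f 0 * coeff f m \<noteq> 0"
    and "j \<le> m - 1"
    and "real_of_int \<bar>coeff f j\<bar> >
           real_of_int \<bar>coeff f (j+1)\<bar> / real_of_int \<bar>coeff f m\<bar>
           + (\<Sum>i<j. real_of_int \<bar>coeff f i\<bar> * real_of_int \<bar>coeff f m\<bar> ^ (j - i))
           + (\<Sum>i\<in>{j+2..m}. real_of_int \<bar>coeff f i\<bar> / real_of_int \<bar>coeff f m\<bar> ^ (i - j))"
  shows "(\<exists>fs :: int poly multiset. (\<forall>g \<in># fs. irreducible g) \<and> prod_mset fs = f \<and> size fs \<le> m - j)
         \<and> (j = m - 1 \<longrightarrow> irreducible f)"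
proof -
  have f0: "coeff f 0 \<noteq> 0" and am: "coeff f m \<noteq> 0" using assms(4) by auto
  have fn: "f \<noteq> 0" using am by auto
  define R where "R = real_of_int \<bar>coeff f m\<bar>"
  have "\<bar>coeff f m\<bar> \<ge> 1" using am by linarith
  then have R1: "R \<ge> 1" unfolding R_def by simp
  define r where "r = 1 / R"
  have r0: "r > 0" and r1: "r \<le> 1" using R1 unfolding r_def by auto
  have Rr: "R * r = 1" using R1 unfolding r_def by simp
  define F where "F = (map_poly of_int f :: complex poly)"
  have Fn: "F \<noteq> 0" using fn unfolding F_def by simp
  have dF: "degree F = m" using assms(2) unfolding F_def by (simp add: degree_map_poly)
  have nn: "0 \<le> real_of_int \<bar>coeff f (j+1)\<bar> / real_of_int \<bar>coeff f m\<bar>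
           + (\<Sum>i<j. real_of_int \<bar>coeff f i\<bar> * real_of_int \<bar>coeff f m\<bar> ^ (j - i))
           + (\<Sum>i\<in>{j+2..m}. real_of_int \<bar>coeff f i\<bar> / real_of_int \<bar>coeff f m\<bar> ^ (i - j))"
    by (intro add_nonneg_nonneg sum_nonneg) auto
  have aj: "coeff f j \<noteq> 0" using assms(6) nn by auto
  have inF: "size (filter_mset (\<lambda>x. cmod x < r) (proots F)) = j"
  proof (rule rouche_poly[OF Fn r0])
    show "(of_int (coeff f j) :: complex) \<noteq> 0" using aj by simp
    show "\<forall>z. cmod z = r \<longrightarrow> cmod (poly F z - of_int (coeff f j) * z ^ j) < cmod (of_int (coeff f j) * z ^ j)"
    proof (intro allI impI)
      fix z :: complex assume "cmod z = r"
      then have z: "cmod z = 1 / real_of_int \<bar>coeff f m\<bar>" unfolding r_def R_def .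
      show "cmod (poly F z - of_int (coeff f j) * z ^ j) < cmod (of_int (coeff f j) * z ^ j)"
        unfolding F_def
        by (rule circ_ineq[OF assms(2) assms(5) _ am assms(6) z]) (use assms(1) in simp)
    qed
  qed
  have outF: "size (filter_mset (\<lambda>x. \<not> cmod x < r) (proots F)) = m - j"
  proof -
    have "m = size (proots F)" using dF by (simp add: size_proots_complex)
    also have "\<dots> = size (filter_mset (\<lambda>x. cmod x < r) (proots F)) + size (filter_mset (\<lambda>x. \<not> cmod x < r) (proots F))"
      by (subst multiset_partition[of _ "\<lambda>x. cmod x < r"]) (simp only: size_union)
    finally show ?thesis using inF by simp
  qed
  have lr: "real_of_int \<bar>lead_coeff f\<bar> * r \<le> 1" using Rr assms(2) unfolding R_def by simp
  have bound: "size fs \<le> m - j" if irr: "\<forall>g\<in>#fs. irreducible g" and pf: "prod_mset fs = f" for fs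
  proof -
    have "\<forall>g\<in>#fs. \<exists>x. poly (map_poly of_int g :: complex poly) x = 0 \<and> \<not> cmod x < r"
    proof
      fix g assume g: "g \<in># fs"
      have "g dvd f" using g pf dvd_prod_mset by blast
      then show "\<exists>x. poly (map_poly of_int g :: complex poly) x = 0 \<and> \<not> cmod x < r"
        using factor_has_outer_root[OF _ _ assms(3) f0 r0 r1 lr] irr g by blast
    qed
    then have "size fs \<le> size (filter_mset (\<lambda>x. \<not> cmod x < r) (proots (map_poly of_int (prod_mset fs) :: complex poly)))"
      using pf fn by (intro count_out) auto
    then show ?thesis using outF pf unfolding F_def by simp
  qed
  have nu: "\<not> is_unit f"
  proof
    assume "is_unit f"
    then obtain c where "f = [:c:]" using is_unit_poly_iff by metis
    then have "degree f = 0" by simp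
    then show False using assms(1,2) by simp
  qed
  obtain fs where fs: "\<forall>g\<in>#fs. irreducible g" "prod_mset fs = f"
    using irr_fact[OF fn nu] by blast
  have part1: "\<exists>fs :: int poly multiset. (\<forall>g \<in># fs. irreducible g) \<and> prod_mset fs = f \<and> size fs \<le> m - j"
    using fs bound by blast
  have part2: "irreducible f" if jm: "j = m - 1"
  proof (rule irreducibleI[OF fn nu])
    fix a b assume ab: "f = a * b"
    show "is_unit a \<or> is_unit b"
    proof (rule ccontr)
      assume "\<not> (is_unit a \<or> is_unit b)"
      then have na: "\<not> is_unit a" and nb: "\<not> is_unit b" by auto
      have a0: "a \<noteq> 0" and b0: "b \<noteq> 0" using ab fn by auto
      obtain fa where fa: "\<forall>g\<in>#fa. irreducible g" "prod_mset fa = a" "fa \<noteq> {#}"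
        using irr_fact[OF a0 na] by blast
      obtain fb where fb: "\<forall>g\<in>#fb. irreducible g" "prod_mset fb = b" "fb \<noteq> {#}"
        using irr_fact[OF b0 nb] by blast
      have "size (fa + fb) \<le> m - j" using fa fb ab by (intro bound) auto
      moreover have "size fa \<ge> 1" "size fb \<ge> 1" using fa(3) fb(3) by (simp_all add: Suc_le_eq nonempty_has_size)
      ultimately show False using jm assms(1) by simp
    qed
  qed
  show ?thesis using part1 part2 by blast
qed

end
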